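(* Let $G$ be a graph on $n$ vertices with at least two vertex-disjoint edges. Then $\Gamma(G)+1 \le d_0(G) \le \min\{n-1, \Gamma(G)+\gamma(G)\}$.
   Context: All graphs are finite and simple. A set $S \subseteq V(G)$ is a dominating set of $G$ if every vertex of $V(G)\setminus S$ is adjacent to a vertex of $S$; it is a minimal dominating set if no proper subset of it is a dominating set. $\gamma(G)$ is the minimum cardinality of a dominating set of $G$, and $\Gamma(G)$ is the maximum cardinality of a minimal dominating set of $G$. For an integer $k \ge \gamma(G)$, the $k$-dominating graph $D_k(G)$ is the graph whose vertices are the dominating sets of $G$ of cardinality at most $k$, with two such sets $A,B$ adjacent if and only if their symmetric difference $(A\setminus B)\cup(B\setminus A)$ consists of exactly one vertex of $G$. $d_0(G)$ denotes the smallest integer $d \ge \gamma(G)$ such that $D_k(G)$ is connected for every integer $k \ge d$. *)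

theory Defs
  imports Main
begin

definition simple_graph :: "'a set \<Rightarrow> 'a set set \<Rightarrow> bool" where
  "simple_graph V E \<longleftrightarrow> finite V \<and>
     (\<forall>e\<in>E. \<exists>u v. e = {u, v} \<and> u \<noteq> v \<and> u \<in> V \<and> v \<in> V)"

definition dominating :: "'a set \<Rightarrow> 'a set set \<Rightarrow> 'a set \<Rightarrow> bool" where
  "dominating V E S \<longleftrightarrow> S \<subseteq> V \<and> (\<forall>v \<in> V - S. \<exists>u \<in> S. {u, v} \<in> E)"

definition minimal_dominating :: "'a set \<Rightarrow> 'a set set \<Rightarrow> 'a set \<Rightarrow> bool" where
  "minimal_dominating V E S \<longleftrightarrow> dominating V E S \<and> (\<forall>T. T \<subset> S \<longrightarrow> \<not> dominating V E T)"

definition domination_number :: "'a set \<Rightarrow> 'a set set \<Rightarrow> nat" where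
  "domination_number V E = Min (card ` {S. dominating V E S})"

definition upper_domination_number :: "'a set \<Rightarrow> 'a set set \<Rightarrow> nat" where
  "upper_domination_number V E = Max (card ` {S. minimal_dominating V E S})"

definition dom_graph_vertices :: "'a set \<Rightarrow> 'a set set \<Rightarrow> nat \<Rightarrow> 'a set set" where
  "dom_graph_vertices V E k = {S. dominating V E S \<and> card S \<le> k}"

definition dom_graph_edges :: "'a set \<Rightarrow> 'a set set \<Rightarrow> nat \<Rightarrow> ('a set \<times> 'a set) set" where
  "dom_graph_edges V E k = {(A, B). A \<in> dom_graph_vertices V E k \<and> B \<in> dom_graph_vertices V E k
      \<and> card ((A - B) \<union> (B - A)) = 1}"

definition dom_graph_connected :: "'a set \<Rightarrow> 'a set set \<Rightarrow> nat \<Rightarrow> bool" where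
  "dom_graph_connected V E k \<longleftrightarrow> dom_graph_vertices V E k \<noteq> {} \<and>
     (\<forall>A \<in> dom_graph_vertices V E k. \<forall>B \<in> dom_graph_vertices V E k.
        (A, B) \<in> (dom_graph_edges V E k)\<^sup>*)"

definition d0 :: "'a set \<Rightarrow> 'a set set \<Rightarrow> nat" where
  "d0 V E = (LEAST d. domination_number V E \<le> d \<and> (\<forall>k \<ge> d. dom_graph_connected V E k))"

end

theory Submission
  imports Defs
begin

lemma edge_props:
  assumes "simple_graph V E" "{u, x} \<in> E"
  shows "u \<in> V" "x \<in> V" "u \<noteq> x"
  using assms unfolding simple_graph_def by (auto simp: doubleton_eq_iff)

lemma dom_mono:
  assumes "dominating V E S" "S \<subseteq> T" "T \<subseteq> V"
  shows "dominating V E T"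
  using assms unfolding dominating_def by blast

lemma dom_V: "dominating V E V"
  unfolding dominating_def by blast

lemma sym_edge:
  assumes "(A, B) \<in> dom_graph_edges V E k"
  shows "(B, A) \<in> dom_graph_edges V E k"
  using assms unfolding dom_graph_edges_def by (simp add: Un_commute)

lemma sym_rtrancl:
  assumes "(A, B) \<in> (dom_graph_edges V E k)\<^sup>*"
  shows "(B, A) \<in> (dom_graph_edges V E k)\<^sup>*"
  using assms
  by (induction rule: rtrancl_induct) (auto intro: converse_rtrancl_into_rtrancl sym_edge)

lemma add_path:
  assumes "finite V" "dominating V E A" "A \<subseteq> B" "B \<subseteq> V" "card B \<le> k"
  shows "(A, B) \<in> (dom_graph_edges V E k)\<^sup>*"
  using assms
proof (induction "card (B - A)" arbitrary: B rule: less_induct)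
  case less
  show ?case
  proof (cases "B = A")
    case True then show ?thesis by simp
  next
    case False
    then obtain b where b: "b \<in> B" "b \<notin> A" using less.prems(3) by blast
    have finB: "finite B" using less.prems finite_subset by blast
    have eq: "(B - {b}) - A = (B - A) - {b}" by blast
    have lt: "card ((B - {b}) - A) < card (B - A)"
      unfolding eq using b finB by (intro card_Diff1_less) auto
    have cB: "card (B - {b}) \<le> k"
      using less.prems(5) finB by (meson card_Diff1_le le_trans)
    have sub1: "A \<subseteq> B - {b}" using less.prems(3) b by blast
    have sub2: "B - {b} \<subseteq> V" using less.prems(4) by blast
    have IH: "(A, B - {b}) \<in> (dom_graph_edges V E k)\<^sup>*"
      using less.hyps[OF lt less.prems(1,2) sub1 sub2 cB] .
    have d1: "dominating V E (B - {b})" using dom_mono[OF less.prems(2) sub1 sub2] .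
    have d2: "dominating V E B" using dom_mono[OF less.prems(2) less.prems(3,4)] .
    have sd: "((B - {b}) - B) \<union> (B - (B - {b})) = {b}" using b by blast
    have "(B - {b}, B) \<in> dom_graph_edges V E k"
      unfolding dom_graph_edges_def dom_graph_vertices_def
      using d1 d2 cB less.prems(5) sd by simp
    then show ?thesis using IH by (rule rtrancl_into_rtrancl[rotated])
  qed
qed

lemma exists_minimal:
  assumes "finite V" "dominating V E A"
  shows "\<exists>A'. A' \<subseteq> A \<and> minimal_dominating V E A'"
  using assms
proof (induction "card A" arbitrary: A rule: less_induct)
  case less
  show ?case
  proof (cases "minimal_dominating V E A")
    case True then show ?thesis by blast
  next
    case False
    then obtain T where T: "T \<subset> A" "dominating V E T"
      using less.prems unfolding minimal_dominating_def by blast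
    have "finite A" using less.prems unfolding dominating_def using finite_subset by blast
    then have "card T < card A" using T psubset_card_mono by blast
    then obtain A' where "A' \<subseteq> T" "minimal_dominating V E A'"
      using less.hyps less.prems T by blast
    then show ?thesis using T by blast
  qed
qed

lemma del1:
  assumes "simple_graph V E" "{u, x} \<in> E"
  shows "dominating V E (V - {x})"
  using edge_props[OF assms] assms unfolding dominating_def by blast

lemma del2:
  assumes "simple_graph V E" "{u, x} \<in> E" "u \<noteq> y" "{w, y} \<in> E" "w \<noteq> x"
  shows "dominating V E (V - {x, y})"
  using edge_props[OF assms(1,2)] edge_props[OF assms(1,4)] assms(2-5)
  unfolding dominating_def by blast

lemma edge1:
  assumes "finite V" "x \<in> V" "y \<in> V" "x \<noteq> y" "dominating V E (V - {x})"
    "dominating V E (V - {x, y})" "card V - 1 \<le> k"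
  shows "(V - {x}, V - {x, y}) \<in> dom_graph_edges V E k"
proof -
  have c1: "card (V - {x}) \<le> k" using assms by simp
  have "card (V - {x, y}) \<le> card (V - {x})" using assms by (intro card_mono) auto
  then have c2: "card (V - {x, y}) \<le> k" using c1 by linarith
  have sd: "((V - {x}) - (V - {x, y})) \<union> ((V - {x, y}) - (V - {x})) = {y}" using assms by blast
  show ?thesis unfolding dom_graph_edges_def dom_graph_vertices_def
    using assms c1 c2 sd by simp
qed

lemma Rstep:
  assumes "simple_graph V E" "card V - 1 \<le> k"
    "{u, x} \<in> E" "u \<noteq> y" "{w, y} \<in> E" "w \<noteq> x"
  shows "(V - {x}, V - {y}) \<in> (dom_graph_edges V E k)\<^sup>*"
proof (cases "x = y")
  case True then show ?thesis by simp
next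
  case False
  have fin: "finite V" using assms(1) unfolding simple_graph_def by blast
  have xV: "x \<in> V" "y \<in> V" using edge_props assms by metis+
  have dx: "dominating V E (V - {x})" using del1 assms by metis
  have dy: "dominating V E (V - {y})" using del1 assms by metis
  have dxy: "dominating V E (V - {x, y})" using del2 assms by metis
  have dyx: "dominating V E (V - {y, x})" using dxy by (simp add: insert_commute)
  have e1: "(V - {x}, V - {x, y}) \<in> dom_graph_edges V E k"
    using edge1[OF fin xV(1) xV(2) False dx dxy assms(2)] .
  have "(V - {y}, V - {y, x}) \<in> dom_graph_edges V E k"
    using edge1[OF fin xV(2) xV(1) _ dy dyx assms(2)] False by metis
  then have e2: "(V - {x, y}, V - {y}) \<in> dom_graph_edges V E k"
    by (simp add: insert_commute sym_edge)
  show ?thesis using e1 e2 by (meson r_into_rtrancl rtrancl_trans)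
qed


lemma dom_finite:
  assumes "finite V"
  shows "finite {S. dominating V E S}"
  by (rule finite_subset[of _ "Pow V"]) (use assms in \<open>auto simp: dominating_def\<close>)

lemma mindom_finite:
  assumes "finite V"
  shows "finite {S. minimal_dominating V E S}"
  by (rule finite_subset[OF _ dom_finite[OF assms]]) (auto simp: minimal_dominating_def)

lemma gamma_le:
  assumes "finite V" "dominating V E S"
  shows "domination_number V E \<le> card S"
  unfolding domination_number_def using assms dom_finite[OF assms(1)]
  by (intro Min_le) auto

lemma gamma_in:
  assumes "finite V"
  shows "\<exists>D. dominating V E D \<and> card D = domination_number V E"
proof -
  have "domination_number V E \<in> card ` {S. dominating V E S}"
    unfolding domination_number_def using dom_finite[OF assms] dom_V[of V E]
    by (intro Min_in) auto
  then show ?thesis by auto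
qed

lemma Gamma_ge:
  assumes "finite V" "minimal_dominating V E S"
  shows "card S \<le> upper_domination_number V E"
  unfolding upper_domination_number_def using assms mindom_finite[OF assms(1)]
  by (intro Max_ge) auto

lemma Gamma_in:
  assumes "finite V"
  shows "\<exists>S. minimal_dominating V E S \<and> card S = upper_domination_number V E"
proof -
  obtain S where "minimal_dominating V E S" using exists_minimal[OF assms dom_V] by blast
  then have "upper_domination_number V E \<in> card ` {S. minimal_dominating V E S}"
    unfolding upper_domination_number_def using mindom_finite[OF assms]
    by (intro Max_in) auto
  then show ?thesis by auto
qed

lemma conn_big:
  assumes "finite V" "upper_domination_number V E + domination_number V E \<le> k"
  shows "dom_graph_connected V E k"
proof -
  let ?r = "dom_graph_edges V E k"
  obtain D where D: "dominating V E D" "card D = domination_number V E"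
    using gamma_in[OF assms(1)] by blast
  have DV: "D \<subseteq> V" using D unfolding dominating_def by blast
  have Dk: "card D \<le> k" using D assms by linarith
  have toD: "(A, D) \<in> ?r\<^sup>*" if A: "A \<in> dom_graph_vertices V E k" for A
  proof -
    have Ad: "dominating V E A" "card A \<le> k" using A unfolding dom_graph_vertices_def by auto
    have AV: "A \<subseteq> V" using Ad unfolding dominating_def by blast
    obtain A' where A': "A' \<subseteq> A" "minimal_dominating V E A'"
      using exists_minimal[OF assms(1) Ad(1)] by blast
    have A'd: "dominating V E A'" using A' unfolding minimal_dominating_def by blast
    have "(A', A) \<in> ?r\<^sup>*" using add_path[OF assms(1) A'd A'(1) AV Ad(2)] .
    then have p1: "(A, A') \<in> ?r\<^sup>*" by (rule sym_rtrancl)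
    have "card A' \<le> upper_domination_number V E" using Gamma_ge[OF assms(1) A'(2)] .
    then have cU: "card (A' \<union> D) \<le> k"
      using card_Un_le[of A' D] D assms by linarith
    have UV: "A' \<union> D \<subseteq> V" using AV A'(1) DV by blast
    have p2: "(A', A' \<union> D) \<in> ?r\<^sup>*" using add_path[OF assms(1) A'd _ UV cU] by blast
    have "(D, A' \<union> D) \<in> ?r\<^sup>*" using add_path[OF assms(1) D(1) _ UV cU] by blast
    then have p3: "(A' \<union> D, D) \<in> ?r\<^sup>*" by (rule sym_rtrancl)
    show ?thesis using p1 p2 p3 by (meson rtrancl_trans)
  qed
  have Din: "D \<in> dom_graph_vertices V E k" unfolding dom_graph_vertices_def using D Dk by blast
  show ?thesis unfolding dom_graph_connected_def
    using Din toD sym_rtrancl by (blast intro: rtrancl_trans)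
qed

lemma conn_n1:
  assumes G: "simple_graph V E" and ab: "{a, b} \<in> E" and cd: "{c, d} \<in> E"
    and disj: "{a, b} \<inter> {c, d} = {}" and k: "card V - 1 \<le> k"
  shows "dom_graph_connected V E k"
proof -
  let ?r = "dom_graph_edges V E k"
  have fin: "finite V" using G unfolding simple_graph_def by blast
  have ne: "a \<noteq> b" "c \<noteq> d" using edge_props[OF G ab] edge_props[OF G cd] by auto
  have ba: "{b, a} \<in> E" "{d, c} \<in> E" using ab cd by (auto simp: insert_commute)
  have dis: "a \<noteq> c" "a \<noteq> d" "b \<noteq> c" "b \<noteq> d" using disj by auto
  have ac: "(V - {a}, V - {c}) \<in> ?r\<^sup>*" using Rstep[OF G k ba(1) _ ba(2)] dis ne by metis
  have ca: "(V - {c}, V - {a}) \<in> ?r\<^sup>*" using Rstep[OF G k ba(2) _ ba(1)] dis ne by metis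
  have bc: "(V - {b}, V - {c}) \<in> ?r\<^sup>*" using Rstep[OF G k ab _ ba(2)] dis ne by metis
  have da: "(V - {d}, V - {a}) \<in> ?r\<^sup>*" using Rstep[OF G k cd _ ba(1)] dis ne by metis
  have key: "(V - {x}, V - {a}) \<in> ?r\<^sup>*" if w: "{w, x} \<in> E" for x w
  proof -
    have wx: "w \<noteq> x" using edge_props[OF G w] by simp
    show ?thesis
    proof (cases "x = a \<or> x = b \<or> x = c \<or> x = d")
      case True
      then show ?thesis using bc ca da by (auto intro: rtrancl_trans)
    next
      case False
      show ?thesis
      proof (cases "w = a")
        case False': False
        show ?thesis using Rstep[OF G k w False' ba(1)] False by metis
      next
        case True
        have "(V - {x}, V - {c}) \<in> ?r\<^sup>*" using Rstep[OF G k w _ ba(2)] True False dis by metis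
        then show ?thesis using ca by (rule rtrancl_trans)
      qed
    qed
  qed
  have aV: "a \<in> V" using edge_props[OF G ab] by simp
  have cV1: "card (V - {a}) \<le> k" using aV fin k by simp
  have Ta: "V - {a} \<in> dom_graph_vertices V E k"
    unfolding dom_graph_vertices_def using del1[OF G ba(1)] cV1 by blast
  have toT: "(A, V - {a}) \<in> ?r\<^sup>*" if A: "A \<in> dom_graph_vertices V E k" for A
  proof -
    have Ad: "dominating V E A" "card A \<le> k" using A unfolding dom_graph_vertices_def by auto
    have AV: "A \<subseteq> V" using Ad unfolding dominating_def by blast
    show ?thesis
    proof (cases "A = V")
      case True
      have sd: "(V - (V - {a})) \<union> ((V - {a}) - V) = {a}" using aV by blast
      have "(A, V - {a}) \<in> ?r" unfolding dom_graph_edges_def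
        using True A Ta sd by simp
      then show ?thesis by blast
    next
      case False
      then obtain x where x: "x \<in> V" "x \<notin> A" using AV by blast
      then obtain u where u: "u \<in> A" "{u, x} \<in> E" using Ad unfolding dominating_def by blast
      have c: "card (V - {x}) \<le> k" using x fin k by simp
      have "(A, V - {x}) \<in> ?r\<^sup>*" using add_path[OF fin Ad(1) _ _ c] x AV by blast
      then show ?thesis using key[OF u(2)] by (rule rtrancl_trans)
    qed
  qed
  show ?thesis unfolding dom_graph_connected_def
    using Ta toT sym_rtrancl by (blast intro: rtrancl_trans)
qed

lemma not_conn_Gamma:
  assumes G: "simple_graph V E" and ab: "{a, b} \<in> E"
  shows "\<not> dom_graph_connected V E (upper_domination_number V E)"
proof
  let ?k = "upper_domination_number V E"
  let ?r = "dom_graph_edges V E ?k"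
  assume conn: "dom_graph_connected V E ?k"
  have fin: "finite V" using G unfolding simple_graph_def by blast
  obtain S where S: "minimal_dominating V E S" "card S = ?k" using Gamma_in[OF fin] by blast
  have Sd: "dominating V E S" using S unfolding minimal_dominating_def by blast
  have SV: "S \<subseteq> V" using Sd unfolding dominating_def by blast
  have finS: "finite S" using SV fin finite_subset by blast
  have Sin: "S \<in> dom_graph_vertices V E ?k" unfolding dom_graph_vertices_def using Sd S by simp
  have iso: "False" if "(S, X) \<in> ?r" for X
  proof -
    have X: "dominating V E X" "card X \<le> ?k" "card ((S - X) \<union> (X - S)) = 1"
      using that unfolding dom_graph_edges_def dom_graph_vertices_def by auto
    then obtain v where v: "(S - X) \<union> (X - S) = {v}" using X(3) card_1_singletonE by blast
    show False
    proof (cases "v \<in> S")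
      case True
      have "X = S - {v}" using v True unfolding set_eq_iff
        by (metis DiffD1 DiffD2 DiffI UnCI UnE insertE insertI1 empty_iff)
      then have "X \<subset> S" using True by blast
      then show False using S(1) X(1) unfolding minimal_dominating_def by blast
    next
      case False
      have "X = insert v S" using v False unfolding set_eq_iff
        by (metis DiffD1 DiffD2 DiffI UnCI UnE insertE insertI1 insertCI empty_iff)
      then have "card X = Suc (card S)" using False finS by simp
      then show False using X(2) S(2) by simp
    qed
  qed
  have only: "X = S" if "(S, X) \<in> ?r\<^sup>*" for X
    using that by (induction rule: rtrancl_induct) (use iso in auto)
  obtain s t where st: "s \<in> S" "{t, s} \<in> E"
  proof (cases "a \<in> S")
    case True
    have "{b, a} \<in> E" using ab by (simp add: insert_commute)
    then show ?thesis using that[OF True] by simp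
  next
    case False
    have "a \<in> V" using edge_props[OF G ab] by simp
    then obtain u where "u \<in> S" "{u, a} \<in> E" using Sd False unfolding dominating_def by blast
    then have "{u, a} \<in> E" "u \<in> S" by simp_all
    moreover have "{a, u} \<in> E" using calculation by (simp add: insert_commute)
    ultimately show ?thesis using that by blast
  qed
  have ds: "dominating V E (V - {s})" using del1[OF G st(2)] .
  obtain T where T: "T \<subseteq> V - {s}" "minimal_dominating V E T"
    using exists_minimal[OF fin ds] by blast
  have Td: "dominating V E T" using T unfolding minimal_dominating_def by blast
  have "card T \<le> ?k" using Gamma_ge[OF fin T(2)] .
  then have Tin: "T \<in> dom_graph_vertices V E ?k" unfolding dom_graph_vertices_def using Td by simp
  have "T \<noteq> S" using T(1) st(1) by blast
  then show False using conn Sin Tin only unfolding dom_graph_connected_def by blast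
qed

theorem corollary6:
  fixes V :: "'a set" and E :: "'a set set"
  assumes "simple_graph V E"
    and "\<exists>e1 \<in> E. \<exists>e2 \<in> E. e1 \<inter> e2 = {}"
  shows "upper_domination_number V E + 1 \<le> d0 V E \<and>
         d0 V E \<le> min (card V - 1) (upper_domination_number V E + domination_number V E)"
proof -
  have G: "simple_graph V E" by fact
  have fin: "finite V" using G unfolding simple_graph_def by blast
  obtain e1 e2 where e: "e1 \<in> E" "e2 \<in> E" "e1 \<inter> e2 = {}" using assms(2) by blast
  obtain a b where ab: "e1 = {a, b}" using e(1) G unfolding simple_graph_def by blast
  obtain c d where cd: "e2 = {c, d}" using e(2) G unfolding simple_graph_def by blast
  let ?U = "upper_domination_number V E"
  let ?g = "domination_number V E"
  let ?m = "min (card V - 1) (?U + ?g)"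
  let ?P = "\<lambda>d. ?g \<le> d \<and> (\<forall>k \<ge> d. dom_graph_connected V E k)"
  have aV: "a \<in> V" using edge_props[OF G] e(1) ab by blast
  have ba: "{b, a} \<in> E" using e(1) ab by (simp add: insert_commute)
  have "?g \<le> card (V - {a})" using gamma_le[OF fin del1[OF G ba]] .
  then have g1: "?g \<le> card V - 1" using aV fin by simp
  have Pm: "?P ?m"
  proof (intro conjI allI impI)
    show "?g \<le> ?m" using g1 by simp
  next
    fix k assume "?m \<le> k"
    then have "card V - 1 \<le> k \<or> ?U + ?g \<le> k" by linarith
    then show "dom_graph_connected V E k"
    proof
      assume "card V - 1 \<le> k"
      then show ?thesis using conn_n1[OF G] e ab cd by blast
    next
      assume "?U + ?g \<le> k"
      then show ?thesis using conn_big[OF fin] by blast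
    qed
  qed
  have up: "d0 V E \<le> ?m" unfolding d0_def by (rule Least_le) (rule Pm)
  have Pd: "?P (d0 V E)" unfolding d0_def by (rule LeastI) (rule Pm)
  have nc: "\<not> dom_graph_connected V E ?U" using not_conn_Gamma[OF G] e(1) ab by blast
  have "?U + 1 \<le> d0 V E"
  proof (rule ccontr)
    assume "\<not> ?U + 1 \<le> d0 V E"
    then have "d0 V E \<le> ?U" by simp
    then show False using Pd nc by blast
  qed
  then show ?thesis using up by blast
qed

end
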